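(* Let $\phi:\mathbb{R}\to\mathbb{R}$ be differentiable and $f(z)=W_d\phi(W_{d-1}\phi(\cdots\phi(W_1z)\cdots))$ with $W_i\in\mathbb{R}^{k_i\times k_{i-1}}$, $k_d=k_0$. Let $x\in\mathbb{R}^{k_0}$ with $\|x\|_2=1$, and run gradient descent with learning rate $\gamma>0$ on $\mathcal{L}(x,f)=\frac12\|x-f(x)\|_2^2$. Suppose $W_d^{(0)}=x{a^{(0)}}^T$, $W_1^{(0)}=b^{(0)}x^T$ with $a^{(0)}\in\mathbb{R}^{k_{d-1}}$, $b^{(0)}\in\mathbb{R}^{k_1}$ such that $a_j^{(0)}=a_1^{(0)}$ for all $j$ and $b_l^{(0)}=b_1^{(0)}$ for all $l$, and $W_i^{(0)}=w_i^{(0)}\mathbf{1}_{k_i\times k_{i-1}}$ with $w_i^{(0)}\in\mathbb{R}$ for $i\in\{2,\dots,d-1\}$. Then for all time steps $t$, $W_d^{(t)}=x{a^{(t)}}^T$, $W_1^{(t)}=b^{(t)}x^T$ with $a_j^{(t)}=a_1^{(t)}$ for all $j\in[k_{d-1}]$, $b_l^{(t)}=b_1^{(t)}$ for all $l\in[k_1]$, and $W_i^{(t)}=w_i^{(t)}\mathbf{1}_{k_i\times k_{i-1}}$ for some $w_i^{(t)}\in\mathbb{R}$, $i\in\{2,\dots,d-1\}$.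
   Context: $\phi$ is applied coordinatewise; $\mathbf{1}_{m\times n}$ is the $m\times n$ all-ones matrix. Gradient descent updates each $W_i\leftarrow W_i-\gamma\nabla_{W_i}\mathcal{L}$ simultaneously. *)

theory Defs
  imports "HOL-Analysis.Analysis"
begin

text \<open>Weights: W i p q is entry (p,q) of the matrix W_i (layer i = 1..d),
  with p < k i and q < k (i-1). Vectors in R^n are functions nat => real
  with indices below n.\<close>

type_synonym weights = "nat \<Rightarrow> nat \<Rightarrow> nat \<Rightarrow> real"

fun act :: "(real \<Rightarrow> real) \<Rightarrow> weights \<Rightarrow> (nat \<Rightarrow> nat) \<Rightarrow> nat \<Rightarrow> (nat \<Rightarrow> real) \<Rightarrow> nat \<Rightarrow> real" where
  "act \<phi> W k 0 z = z"
| "act \<phi> W k (Suc i) z = (\<lambda>p. \<phi> (\<Sum>q<k i. W (Suc i) p q * act \<phi> W k i z q))"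

definition net :: "(real \<Rightarrow> real) \<Rightarrow> weights \<Rightarrow> (nat \<Rightarrow> nat) \<Rightarrow> nat \<Rightarrow> (nat \<Rightarrow> real) \<Rightarrow> nat \<Rightarrow> real" where
  "net \<phi> W k d z = (\<lambda>p. \<Sum>q<k (d - 1). W d p q * act \<phi> W k (d - 1) z q)"

definition loss :: "(real \<Rightarrow> real) \<Rightarrow> weights \<Rightarrow> (nat \<Rightarrow> nat) \<Rightarrow> nat \<Rightarrow> (nat \<Rightarrow> real) \<Rightarrow> real" where
  "loss \<phi> W k d x = 1/2 * (\<Sum>p<k d. (x p - net \<phi> W k d x p)^2)"

definition grad :: "(real \<Rightarrow> real) \<Rightarrow> (nat \<Rightarrow> nat) \<Rightarrow> nat \<Rightarrow> (nat \<Rightarrow> real) \<Rightarrow> weights \<Rightarrow> weights" where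
  "grad \<phi> k d x W = (\<lambda>i p q.
     deriv (\<lambda>s. loss \<phi> (W(i := (W i)(p := (W i p)(q := s)))) k d x) (W i p q))"

definition gd_step :: "(real \<Rightarrow> real) \<Rightarrow> (nat \<Rightarrow> nat) \<Rightarrow> nat \<Rightarrow> (nat \<Rightarrow> real) \<Rightarrow> real \<Rightarrow> weights \<Rightarrow> weights" where
  "gd_step \<phi> k d x \<gamma> W = (\<lambda>i p q. W i p q - \<gamma> * grad \<phi> k d x W i p q)"

definition gd_iter :: "(real \<Rightarrow> real) \<Rightarrow> (nat \<Rightarrow> nat) \<Rightarrow> nat \<Rightarrow> (nat \<Rightarrow> real) \<Rightarrow> real \<Rightarrow> weights \<Rightarrow> nat \<Rightarrow> weights" where
  "gd_iter \<phi> k d x \<gamma> W0 t = ((gd_step \<phi> k d x \<gamma>) ^^ t) W0"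

end

theory Submission imports Defs begin

abbreviation upd :: "weights \<Rightarrow> nat \<Rightarrow> nat \<Rightarrow> nat \<Rightarrow> real \<Rightarrow> weights" where
  "upd W i p q s \<equiv> W(i := (W i)(p := (W i p)(q := s)))"

lemma grad_upd: "grad \<phi> k d x W i p q = deriv (\<lambda>s. loss \<phi> (upd W i p q s) k d x) (W i p q)"
  by (simp add: grad_def)

lemma act_layers:
  "(\<forall>l. 1 \<le> l \<longrightarrow> l \<le> i \<longrightarrow> W' l = W l) \<Longrightarrow> act \<phi> W' k i z = act \<phi> W k i z"
  by (induction i) auto

lemma act_agree:
  assumes "\<forall>i p q. 1 \<le> i \<longrightarrow> i \<le> d \<longrightarrow> p < k i \<longrightarrow> q < k (i-1) \<longrightarrow> W i p q = W' i p q"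
  shows "i \<le> d \<Longrightarrow> p < k i \<Longrightarrow> act \<phi> W k i z p = act \<phi> W' k i z p"
proof (induction i arbitrary: p)
  case 0 then show ?case by simp
next
  case (Suc i)
  have "(\<Sum>q<k i. W (Suc i) p q * act \<phi> W k i z q) = (\<Sum>q<k i. W' (Suc i) p q * act \<phi> W' k i z q)"
    using Suc assms by (intro sum.cong) auto
  then show ?case by simp
qed

lemma loss_agree:
  assumes "\<forall>i p q. 1 \<le> i \<longrightarrow> i \<le> d \<longrightarrow> p < k i \<longrightarrow> q < k (i-1) \<longrightarrow> W i p q = W' i p q"
    and "d \<ge> 1"
  shows "loss \<phi> W k d z = loss \<phi> W' k d z"
proof -
  have "net \<phi> W k d z p = net \<phi> W' k d z p" if "p < k d" for p
    unfolding net_def using assms that act_agree[OF assms(1), of "d-1"]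
    by (intro sum.cong) auto
  then show ?thesis unfolding loss_def by simp
qed

definition sw :: "nat \<Rightarrow> nat \<Rightarrow> nat \<Rightarrow> nat" where
  "sw u v p = (if p = u then v else if p = v then u else p)"

definition permW :: "nat \<Rightarrow> nat \<Rightarrow> nat \<Rightarrow> weights \<Rightarrow> weights" where
  "permW j u v W = W(j := (\<lambda>p q. W j (sw u v p) q), Suc j := (\<lambda>p q. W (Suc j) p (sw u v q)))"

lemma sw_bij: "u < n \<Longrightarrow> v < n \<Longrightarrow> bij_betw (sw u v) {..<n} {..<n}"
  unfolding bij_betw_def inj_on_def sw_def by (auto simp: image_def)

lemma sum_sw:
  assumes "u < n" "v < n"
  shows "(\<Sum>q<n. f (sw u v q)) = (\<Sum>q<n. f q)"
  using sum.reindex_bij_betw[OF sw_bij[OF assms], of f] by simp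

lemma act_perm:
  assumes "j \<ge> 1" "u < k j" "v < k j"
  shows "act \<phi> (permW j u v W) k i z = (if i = j then (\<lambda>p. act \<phi> W k j z (sw u v p)) else act \<phi> W k i z)"
proof (induction i)
  case 0 then show ?case using assms by simp
next
  case (Suc i)
  show ?case
  proof (cases "Suc i = j")
    case True
    then show ?thesis using Suc by (auto simp: permW_def)
  next
    case F: False
    show ?thesis
    proof (cases "i = j")
      case True
      have "(\<Sum>q<k j. W (Suc j) p (sw u v q) * act \<phi> W k j z (sw u v q)) = (\<Sum>q<k j. W (Suc j) p q * act \<phi> W k j z q)" for p
        using sum_sw[OF assms(2,3), of "\<lambda>q. W (Suc j) p q * act \<phi> W k j z q"] by simp
      then show ?thesis using Suc True by (auto simp: permW_def)
    next
      case False
      then show ?thesis using Suc F by (auto simp: permW_def)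
    qed
  qed
qed

lemma loss_perm:
  assumes "j \<ge> 1" "Suc j \<le> d" "u < k j" "v < k j"
  shows "loss \<phi> (permW j u v W) k d z = loss \<phi> W k d z"
proof -
  have "net \<phi> (permW j u v W) k d z p = net \<phi> W k d z p" for p
  proof (cases "d - 1 = j")
    case True
    then have dj: "d = Suc j" using assms by simp
    show ?thesis unfolding net_def act_perm[where k=k, OF assms(1,3,4)] using True dj
      using sum_sw[OF assms(3,4), of "\<lambda>q. W (Suc j) p q * act \<phi> W k j z q"]
      by (simp add: permW_def)
  next
    case False
    then show ?thesis unfolding net_def act_perm[where k=k, OF assms(1,3,4)] using assms
      by (simp add: permW_def)
  qed
  then show ?thesis unfolding loss_def by simp
qed

lemma grad_sym_row:
  assumes j1: "j \<ge> 1" and jd: "Suc j \<le> d" and uv: "u < k j" "v < k j" and q: "q < k (j-1)"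
    and rows: "\<forall>q'<k (j-1). W j u q' = W j v q'"
    and cols: "\<forall>p<k (Suc j). W (Suc j) p u = W (Suc j) p v"
  shows "grad \<phi> k d x W j u q = grad \<phi> k d x W j v q"
proof (cases "u = v")
  case True then show ?thesis by simp
next
  case uv_ne: False
  have "loss \<phi> (upd W j u q s) k d x = loss \<phi> (upd W j v q s) k d x" for s
  proof -
    have "loss \<phi> (upd W j u q s) k d x = loss \<phi> (permW j u v (upd W j u q s)) k d x"
      using loss_perm[where k=k, OF j1 jd uv] by simp
    also have "\<dots> = loss \<phi> (upd W j v q s) k d x"
    proof (rule loss_agree)
      show "1 \<le> d" using jd by simp
      show "\<forall>i p q'. 1 \<le> i \<longrightarrow> i \<le> d \<longrightarrow> p < k i \<longrightarrow> q' < k (i - 1) \<longrightarrow>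
        permW j u v (upd W j u q s) i p q' = upd W j v q s i p q'"
        using rows cols uv_ne by (auto simp: permW_def sw_def)
    qed
    finally show ?thesis .
  qed
  then show ?thesis unfolding grad_upd using rows q by simp
qed

lemma grad_sym_col:
  assumes j1: "j \<ge> 1" and jd: "Suc j \<le> d" and uv: "u < k j" "v < k j" and p: "p < k (Suc j)"
    and rows: "\<forall>q'<k (j-1). W j u q' = W j v q'"
    and cols: "\<forall>p<k (Suc j). W (Suc j) p u = W (Suc j) p v"
  shows "grad \<phi> k d x W (Suc j) p u = grad \<phi> k d x W (Suc j) p v"
proof (cases "u = v")
  case True then show ?thesis by simp
next
  case uv_ne: False
  have "loss \<phi> (upd W (Suc j) p u s) k d x = loss \<phi> (upd W (Suc j) p v s) k d x" for s
  proof -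
    have "loss \<phi> (upd W (Suc j) p u s) k d x = loss \<phi> (permW j u v (upd W (Suc j) p u s)) k d x"
      using loss_perm[where k=k, OF j1 jd uv] by simp
    also have "\<dots> = loss \<phi> (upd W (Suc j) p v s) k d x"
    proof (rule loss_agree)
      show "1 \<le> d" using jd by simp
      show "\<forall>i p' q'. 1 \<le> i \<longrightarrow> i \<le> d \<longrightarrow> p' < k i \<longrightarrow> q' < k (i - 1) \<longrightarrow>
        permW j u v (upd W (Suc j) p u s) i p' q' = upd W (Suc j) p v s i p' q'"
        using rows cols uv_ne by (auto simp: permW_def sw_def)
    qed
    finally show ?thesis .
  qed
  then show ?thesis unfolding grad_upd using cols p by simp
qed

lemma act_diff:
  assumes dphi: "\<forall>z. \<phi> differentiable (at z)"
    and dV: "\<forall>i p q. (\<lambda>s. V s i p q) differentiable (at s0)"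
  shows "(\<lambda>s. act \<phi> (V s) k i z p) differentiable (at s0)"
proof (induction i arbitrary: p)
  case 0 then show ?case by simp
next
  case (Suc i)
  have "(\<lambda>s. \<Sum>q<k i. V s (Suc i) p q * act \<phi> (V s) k i z q) differentiable (at s0)"
    using Suc dV by (intro differentiable_sum ballI differentiable_mult) auto
  then have "(\<lambda>s. \<phi> (\<Sum>q<k i. V s (Suc i) p q * act \<phi> (V s) k i z q)) differentiable (at s0)"
    using dphi by (rule_tac differentiable_compose[where f=\<phi>]) auto
  then show ?case by simp
qed

lemma loss_diff:
  assumes dphi: "\<forall>z. \<phi> differentiable (at z)"
    and dV: "\<forall>i p q. (\<lambda>s. V s i p q) differentiable (at s0)"
  shows "(\<lambda>s. loss \<phi> (V s) k d z) differentiable (at s0)"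
proof -
  have nd: "(\<lambda>s. net \<phi> (V s) k d z p) differentiable (at s0)" for p
    unfolding net_def using act_diff[OF dphi dV] dV
    by (intro differentiable_sum ballI differentiable_mult) auto
  then have "(\<lambda>s. 1/2 * (\<Sum>p<k d. (z p - net \<phi> (V s) k d z p)^2)) differentiable (at s0)"
  proof -
    have "(\<lambda>s. (z p - net \<phi> (V s) k d z p)^2) differentiable (at s0)" for p
      using nd[of p] by (intro differentiable_power differentiable_diff differentiable_const) auto
    then show ?thesis by (intro differentiable_mult differentiable_const differentiable_sum ballI) auto
  qed
  then show ?thesis unfolding loss_def by simp
qed

lemma loss_preact:
  assumes d2: "d \<ge> 2" and oth: "\<forall>i. i \<noteq> 1 \<longrightarrow> W' i = W i"
    and pre: "\<forall>p. (\<Sum>q<k 0. W' 1 p q * z q) = (\<Sum>q<k 0. W 1 p q * z q)"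
  shows "loss \<phi> W' k d z = loss \<phi> W k d z"
proof -
  have a: "i \<ge> 1 \<Longrightarrow> act \<phi> W' k i z = act \<phi> W k i z" for i
  proof (induction i)
    case 0 then show ?case by simp
  next
    case (Suc i)
    show ?case
    proof (cases "i = 0")
      case True then show ?thesis using pre by simp
    next
      case False then show ?thesis using Suc oth by simp
    qed
  qed
  have "net \<phi> W' k d z = net \<phi> W k d z"
    unfolding net_def using a[of "d-1"] oth d2 by simp
  then show ?thesis unfolding loss_def by simp
qed

definition Gf :: "(real \<Rightarrow> real) \<Rightarrow> (nat \<Rightarrow> nat) \<Rightarrow> nat \<Rightarrow> (nat \<Rightarrow> real) \<Rightarrow> weights \<Rightarrow> nat \<Rightarrow> real \<Rightarrow> real" where
  "Gf \<phi> k d x W l y = loss \<phi> (W(1 := (W 1)(l := (\<lambda>q'. y * x q')))) k d x"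

lemma Gf_diff:
  assumes dphi: "\<forall>z. \<phi> differentiable (at z)"
  shows "Gf \<phi> k d x W l differentiable (at y)"
proof -
  have "\<forall>i p q. (\<lambda>s. (W(1 := (W 1)(l := (\<lambda>q'. s * x q')))) i p q) differentiable (at y)"
  proof (intro allI)
    fix i p q
    show "(\<lambda>s. (W(1 := (W 1)(l := (\<lambda>q'. s * x q')))) i p q) differentiable (at y)"
      by (cases "i = 1"; cases "p = l") (auto intro!: differentiable_mult differentiable_const differentiable_ident)
  qed
  then have "(\<lambda>s. loss \<phi> (W(1 := (W 1)(l := (\<lambda>q'. s * x q')))) k d x) differentiable (at y)"
    by (rule loss_diff[OF dphi])
  moreover have "Gf \<phi> k d x W l = (\<lambda>s. loss \<phi> (W(1 := (W 1)(l := (\<lambda>q'. s * x q')))) k d x)"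
    by (rule ext) (simp add: Gf_def)
  ultimately show ?thesis by simp
qed

lemma grad_layer1:
  assumes dphi: "\<forall>z. \<phi> differentiable (at z)" and d2: "d \<ge> 2"
    and xn: "(\<Sum>q<k 0. (x q)^2) = 1" and q: "q < k 0"
  shows "grad \<phi> k d x W 1 l q = x q * deriv (Gf \<phi> k d x W l) (\<Sum>q'<k 0. W 1 l q' * x q')"
proof -
  define P where "P = (\<Sum>q'<k 0. W 1 l q' * x q')"
  have sum1: "(\<Sum>q'<k 0. ((W 1 l)(q := s)) q' * x q') = P + (s - W 1 l q) * x q" for s
  proof -
    have "(\<Sum>q'<k 0. ((W 1 l)(q := s)) q' * x q')
        = (\<Sum>q'<k 0. W 1 l q' * x q' + (if q' = q then (s - W 1 l q) * x q else 0))"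
      by (intro sum.cong) (auto simp: algebra_simps)
    also have "\<dots> = P + (s - W 1 l q) * x q"
      using q by (simp add: sum.distrib P_def)
    finally show ?thesis .
  qed
  have sum2: "(\<Sum>q'<k 0. (c * x q') * x q') = c" for c
    using xn by (simp add: sum_distrib_left[symmetric] power2_eq_square mult.assoc)
  have eq: "loss \<phi> (upd W 1 l q s) k d x = Gf \<phi> k d x W l (P + (s - W 1 l q) * x q)" for s
    unfolding Gf_def
  proof (rule loss_preact[OF d2])
    show "\<forall>i. i \<noteq> 1 \<longrightarrow> upd W 1 l q s i = (W(1 := (W 1)(l := \<lambda>q'. (P + (s - W 1 l q) * x q) * x q'))) i"
      by simp
    show "\<forall>p. (\<Sum>r<k 0. upd W 1 l q s 1 p r * x r) =
          (\<Sum>r<k 0. (W(1 := (W 1)(l := \<lambda>q'. (P + (s - W 1 l q) * x q) * x q'))) 1 p r * x r)"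
      apply (intro allI)
      subgoal for p using sum1[of s] sum2[of "P + (s - W 1 l q) * x q"] by (cases "p = l") simp_all
      done
  qed
  have D1: "((\<lambda>s. P + (s - W 1 l q) * x q) has_real_derivative x q) (at (W 1 l q))"
    by (auto intro!: derivative_eq_intros)
  have D2: "(Gf \<phi> k d x W l has_real_derivative deriv (Gf \<phi> k d x W l) P) (at P)"
    using Gf_diff[OF dphi] DERIV_deriv_iff_real_differentiable by blast
  have "((\<lambda>s. Gf \<phi> k d x W l (P + (s - W 1 l q) * x q)) has_real_derivative
          deriv (Gf \<phi> k d x W l) P * x q) (at (W 1 l q))"
    using DERIV_chain2[of "Gf \<phi> k d x W l" _ "\<lambda>s. P + (s - W 1 l q) * x q", OF _ D1] D2 by simp
  then have "deriv (\<lambda>s. loss \<phi> (upd W 1 l q s) k d x) (W 1 l q) = deriv (Gf \<phi> k d x W l) P * x q"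
    unfolding eq by (rule DERIV_imp_deriv)
  then show ?thesis unfolding grad_upd P_def by simp
qed

lemma sum_upd:
  fixes n q :: nat
  assumes "q < n"
  shows "(\<Sum>r<n. (f(q := s)) r * g r) = (\<Sum>r<n. f r * g r) + (s - f q) * (g q :: real)"
proof -
  have "(\<Sum>r<n. (f(q := s)) r * g r) = (\<Sum>r<n. f r * g r + (if r = q then (s - f q) * g q else 0))"
    by (intro sum.cong) (auto simp: algebra_simps)
  also have "\<dots> = (\<Sum>r<n. f r * g r) + (s - f q) * g q"
    using assms by (simp add: sum.distrib sum.delta[of "{..<n}" q "\<lambda>_. (s - f q) * g q"])
  finally show ?thesis .
qed

lemma grad_layerd:
  assumes d1: "d \<ge> 1" and p: "p < k d" and q: "q < k (d-1)"
  shows "grad \<phi> k d x W d p q = - (x p - net \<phi> W k d x p) * act \<phi> W k (d-1) x q"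
proof -
  define h where "h = act \<phi> W k (d-1) x"
  define s0 where "s0 = W d p q"
  have hu: "act \<phi> (upd W d p q s) k (d-1) x = h" for s
    unfolding h_def using d1 by (intro act_layers) auto
  have nu: "net \<phi> (upd W d p q s) k d x p' = net \<phi> W k d x p' + (if p' = p then (s - s0) * h q else 0)" for s p'
    unfolding net_def hu using sum_upd[OF q, of "W d p" s h] by (auto simp: h_def s0_def)
  have lu: "loss \<phi> (upd W d p q s) k d x
      = loss \<phi> W k d x + (- (x p - net \<phi> W k d x p) * ((s - s0) * h q) + 1/2 * ((s - s0) * h q)^2)" for s
  proof -
    have "loss \<phi> (upd W d p q s) k d x = 1/2 * (\<Sum>p'<k d. (x p' - net \<phi> W k d x p')^2
       + (if p' = p then - 2 * (x p - net \<phi> W k d x p) * ((s - s0) * h q) + ((s - s0) * h q)^2 else 0))"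
      unfolding loss_def nu by (intro arg_cong[where f="\<lambda>t. 1/2 * t"] sum.cong) (auto simp: power2_eq_square algebra_simps)
    also have "\<dots> = loss \<phi> W k d x + (- (x p - net \<phi> W k d x p) * ((s - s0) * h q) + 1/2 * ((s - s0) * h q)^2)"
      using p by (simp add: sum.distrib loss_def algebra_simps)
    finally show ?thesis .
  qed
  have "((\<lambda>s. loss \<phi> W k d x + (- (x p - net \<phi> W k d x p) * ((s - s0) * h q) + 1/2 * ((s - s0) * h q)^2))
     has_real_derivative - (x p - net \<phi> W k d x p) * h q) (at s0)"
    by (auto intro!: derivative_eq_intros)
  then have "deriv (\<lambda>s. loss \<phi> (upd W d p q s) k d x) s0 = - (x p - net \<phi> W k d x p) * h q"
    unfolding lu by (rule DERIV_imp_deriv)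
  then show ?thesis unfolding grad_upd s0_def h_def by simp
qed

definition good :: "(nat \<Rightarrow> nat) \<Rightarrow> nat \<Rightarrow> (nat \<Rightarrow> real) \<Rightarrow> weights \<Rightarrow> bool" where
  "good k d x W \<longleftrightarrow> (\<exists>a b w.
         (\<forall>p<k d. \<forall>q<k (d-1). W d p q = x p * a q) \<and> (\<forall>j<k (d-1). a j = a 0)
       \<and> (\<forall>l<k 1. \<forall>q<k 0. W 1 l q = b l * x q) \<and> (\<forall>l<k 1. b l = b 0)
       \<and> (\<forall>i\<in>{2..d-1}. \<forall>p<k i. \<forall>q<k (i-1). W i p q = w i))"

lemma step:
  assumes diff: "\<forall>z. \<phi> differentiable (at z)"
    and d2: "d \<ge> 2"
    and kpos: "\<forall>i\<le>d. k i > 0"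
    and kd: "k d = k 0"
    and xnorm: "sqrt (\<Sum>p<k 0. (x p)^2) = 1"
    and G: "good k d x W"
  shows "good k d x (gd_step \<phi> k d x \<gamma> W)"
proof -
  obtain a b w where
    Wd: "\<forall>p<k d. \<forall>q<k (d-1). W d p q = x p * a q" and ac: "\<forall>j<k (d-1). a j = a 0"
    and W1: "\<forall>l<k 1. \<forall>q<k 0. W 1 l q = b l * x q" and bc: "\<forall>l<k 1. b l = b 0"
    and Wm: "\<forall>i\<in>{2..d-1}. \<forall>p<k i. \<forall>q<k (i-1). W i p q = w i"
    using G unfolding good_def by blast
  let ?g = "grad \<phi> k d x W"
  have xn: "(\<Sum>p<k 0. (x p)^2) = 1" using xnorm by simp
  have "\<exists>q0<k 0. x q0 \<noteq> 0"
  proof (rule ccontr)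
    assume "\<not> (\<exists>q0<k 0. x q0 \<noteq> 0)"
    then have "\<forall>q<k 0. x q = 0" by auto
    then have "(\<Sum>p<k 0. (x p)^2) = 0" by simp
    then show False using xn by simp
  qed
  then obtain q0 where q0: "q0 < k 0" "x q0 \<noteq> 0" by blast
  have RowEq: "W j u q = W j v q" if "1 \<le> j" "j \<le> d-1" "u < k j" "v < k j" "q < k (j-1)" for j u v q
  proof (cases "j = 1")
    case True
    then have "u < k 1" "v < k 1" "q < k 0" using that by auto
    then show ?thesis using True W1 bc[rule_format, of u] bc[rule_format, of v] by simp
  next
    case False
    then have j: "j \<in> {2..d-1}" using that by auto
    show ?thesis using Wm[rule_format, OF j, of u q] Wm[rule_format, OF j, of v q] that by simp
  qed
  have ColEq: "W j p u = W j p v" if "2 \<le> j" "j \<le> d" "p < k j" "u < k (j-1)" "v < k (j-1)" for j p u v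
  proof (cases "j = d")
    case True
    then have "p < k d" "u < k (d-1)" "v < k (d-1)" using that by auto
    then show ?thesis using True Wd ac[rule_format, of u] ac[rule_format, of v] by simp
  next
    case False
    then have j: "j \<in> {2..d-1}" using that by auto
    show ?thesis using Wm[rule_format, OF j, of p u] Wm[rule_format, OF j, of p v] that by simp
  qed
  have GR: "?g j u q = ?g j v q" if "1 \<le> j" "Suc j \<le> d" "u < k j" "v < k j" "q < k (j-1)" for j u v q
    using that by (intro grad_sym_row allI impI RowEq ColEq) auto
  have GC: "?g (Suc j) p u = ?g (Suc j) p v" if "1 \<le> j" "Suc j \<le> d" "u < k j" "v < k j" "p < k (Suc j)" for j p u v
    using that by (intro grad_sym_col allI impI RowEq ColEq) auto
  define h where "h = act \<phi> W k (d-1) x"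
  define m where "m = (\<Sum>q<k (d-1). a q * h q)"
  have kd1: "k (d-1) > 0" using kpos by simp
  have hc: "h q = h 0" if "q < k (d-1)" for q
  proof -
    define j where "j = d - 2"
    have j: "d - 1 = Suc j" using d2 unfolding j_def by simp
    have "(\<Sum>r<k j. W (Suc j) q r * act \<phi> W k j x r) = (\<Sum>r<k j. W (Suc j) 0 r * act \<phi> W k j x r)"
    proof (intro sum.cong refl)
      fix r assume "r \<in> {..<k j}"
      then have "W (Suc j) q r = W (Suc j) 0 r"
        using RowEq[of "Suc j" q 0 r] that kd1 j by simp
      then show "W (Suc j) q r * act \<phi> W k j x r = W (Suc j) 0 r * act \<phi> W k j x r" by simp
    qed
    then show ?thesis unfolding h_def j by simp
  qed
  have netW: "net \<phi> W k d x p = x p * m" if "p < k d" for p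
    unfolding net_def m_def h_def sum_distrib_left using that Wd by (intro sum.cong) auto
  have Ld: "gd_step \<phi> k d x \<gamma> W d p q = x p * (a 0 + \<gamma> * (1 - m) * h 0)"
    if "p < k d" "q < k (d-1)" for p q
  proof -
    have gdd: "?g d p q = - (x p - x p * m) * h 0"
      using grad_layerd[of d p k q \<phi> x W] d2 that netW[OF that(1)] hc[OF that(2)] by (simp add: h_def)
    have "gd_step \<phi> k d x \<gamma> W d p q = x p * a 0 - \<gamma> * (- (x p - x p * m) * h 0)"
      unfolding gd_step_def gdd using that Wd ac[rule_format, OF that(2)] by simp
    then show ?thesis by (simp add: algebra_simps)
  qed
  define D where "D l = deriv (Gf \<phi> k d x W l) (\<Sum>q'<k 0. W 1 l q' * x q')" for l
  have g1: "?g 1 l q = x q * D l" if "q < k 0" for l q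
    unfolding D_def using grad_layer1[where k=k and x=x, OF diff d2 xn that] .
  have Dc: "D l = D 0" if "l < k 1" for l
  proof -
    have "?g 1 l q0 = ?g 1 0 q0" using GR[of 1 l 0 q0] that q0 kpos d2 by auto
    then show ?thesis using g1[OF q0(1)] q0(2) by simp
  qed
  have L1: "gd_step \<phi> k d x \<gamma> W 1 l q = (b 0 - \<gamma> * D 0) * x q" if "l < k 1" "q < k 0" for l q
    using that W1 bc[rule_format, OF that(1)] Dc[OF that(1)] g1[OF that(2), of l] unfolding gd_step_def by (simp add: algebra_simps)
  have Lm: "gd_step \<phi> k d x \<gamma> W i p q = w i - \<gamma> * ?g i 0 0"
    if "i \<in> {2..d-1}" "p < k i" "q < k (i-1)" for i p q
  proof -
    have ki: "k i > 0" "k (i-1) > 0" using that kpos by auto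
    have "?g i p q = ?g i 0 q" using GR[of i p 0 q] that ki by auto
    also have "\<dots> = ?g i 0 0"
    proof -
      have i: "i = Suc (i-1)" using that by auto
      have "?g (Suc (i-1)) 0 q = ?g (Suc (i-1)) 0 0"
        using GC[of "i-1" 0 q 0] that ki i by auto
      then show ?thesis using i by simp
    qed
    finally show ?thesis using that Wm unfolding gd_step_def by simp
  qed
  show ?thesis unfolding good_def
    apply (rule exI[of _ "\<lambda>_. a 0 + \<gamma> * (1 - m) * h 0"])
    apply (rule exI[of _ "\<lambda>_. b 0 - \<gamma> * D 0"])
    apply (rule exI[of _ "\<lambda>i. w i - \<gamma> * ?g i 0 0"])
    using Ld L1 Lm by simp
qed

theorem mainTheorem10:
  fixes \<phi> :: "real \<Rightarrow> real" and k :: "nat \<Rightarrow> nat" and d :: nat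
    and x :: "nat \<Rightarrow> real" and \<gamma> :: real and W0 :: weights
  assumes diff: "\<forall>z. \<phi> differentiable (at z)"
    and d2: "d \<ge> 2"
    and kpos: "\<forall>i\<le>d. k i > 0"
    and kd: "k d = k 0"
    and xnorm: "sqrt (\<Sum>p<k 0. (x p)^2) = 1"
    and gam: "\<gamma> > 0"
    and init: "\<exists>a b w.
         (\<forall>p<k d. \<forall>q<k (d-1). W0 d p q = x p * a q) \<and> (\<forall>j<k (d-1). a j = a 0)
       \<and> (\<forall>l<k 1. \<forall>q<k 0. W0 1 l q = b l * x q) \<and> (\<forall>l<k 1. b l = b 0)
       \<and> (\<forall>i\<in>{2..d-1}. \<forall>p<k i. \<forall>q<k (i-1). W0 i p q = w i)"
  shows "\<forall>t. \<exists>a b w.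
         (\<forall>p<k d. \<forall>q<k (d-1). gd_iter \<phi> k d x \<gamma> W0 t d p q = x p * a q) \<and> (\<forall>j<k (d-1). a j = a 0)
       \<and> (\<forall>l<k 1. \<forall>q<k 0. gd_iter \<phi> k d x \<gamma> W0 t 1 l q = b l * x q) \<and> (\<forall>l<k 1. b l = b 0)
       \<and> (\<forall>i\<in>{2..d-1}. \<forall>p<k i. \<forall>q<k (i-1). gd_iter \<phi> k d x \<gamma> W0 t i p q = w i)"
proof
  fix t
  have G0: "good k d x W0" using init unfolding good_def .
  have "good k d x (gd_iter \<phi> k d x \<gamma> W0 t)"
  proof (induction t)
    case 0 then show ?case using G0 by (simp add: gd_iter_def)
  next
    case (Suc t)
    have "gd_iter \<phi> k d x \<gamma> W0 (Suc t) = gd_step \<phi> k d x \<gamma> (gd_iter \<phi> k d x \<gamma> W0 t)"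
      by (simp add: gd_iter_def)
    then show ?case using step[OF diff d2 kpos kd xnorm Suc] by simp
  qed
  then show "\<exists>a b w.
         (\<forall>p<k d. \<forall>q<k (d-1). gd_iter \<phi> k d x \<gamma> W0 t d p q = x p * a q) \<and> (\<forall>j<k (d-1). a j = a 0)
       \<and> (\<forall>l<k 1. \<forall>q<k 0. gd_iter \<phi> k d x \<gamma> W0 t 1 l q = b l * x q) \<and> (\<forall>l<k 1. b l = b 0)
       \<and> (\<forall>i\<in>{2..d-1}. \<forall>p<k i. \<forall>q<k (i-1). gd_iter \<phi> k d x \<gamma> W0 t i p q = w i)"
    unfolding good_def .
qed

end
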